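(* Let $f:\mathbb{R}^n\to(-\infty,\infty]$ and $g:\mathbb{R}^p\to(-\infty,\infty]$ be proper closed convex functions, $A\in\mathbb{R}^{m\times n}$, $B\in\mathbb{R}^{m\times p}$, $b\in\mathbb{R}^m$, $\beta>0$, $\tilde\sigma\in[0,1)$, $G\in\mathbb{S}^n_{++}$, $H\in\mathbb{S}^p_+$, and $(\tau,\theta)\in\mathcal R_{\tilde\sigma}$. Define the set-valued operator $T$ on $\mathbb{R}^n\times\mathbb{R}^p\times\mathbb{R}^m$ and the matrix $M$ by $$T(x,y,\gamma)=\begin{bmatrix}\partial f(x)-A^*\gamma\\ \partial g(y)-B^*\gamma\\ Ax+By-b\end{bmatrix},\qquad M=\begin{bmatrix}G&0&0\\0&H+\frac{(\tau-\tau\theta+\theta)\beta}{\tau+\theta}B^*B&-\frac{\tau}{\tau+\theta}B^*\\0&-\frac{\tau}{\tau+\theta}B&\frac{1}{(\tau+\theta)\beta}I\end{bmatrix}.$$ Then $T$ is maximal monotone and $M$ is symmetric positive semidefinite.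
   Context: $\partial$ denotes the subdifferential of a convex function, $A^*$ the transpose, $\mathbb{S}^n_{++}$ ($\mathbb{S}^p_+$) the symmetric positive definite (semidefinite) $n\times n$ ($p\times p$) matrices. $\mathcal R_{\tilde\sigma}:=\{(\tau,\theta):\tau\in(-1,1-\tilde\sigma),\ \tau+\theta>0,\ (1-\tau^2)(2-\tau-\theta-\tilde\sigma)-(1-\theta)^2(1-\tau-\tilde\sigma)>0\}$. *)

theory Defs
  imports "HOL-Analysis.Analysis"
begin

definition proper_fun :: "('a \<Rightarrow> ereal) \<Rightarrow> bool" where
  "proper_fun f \<longleftrightarrow> (\<forall>x. f x \<noteq> -\<infinity>) \<and> (\<exists>x. f x \<noteq> \<infinity>)"

definition epigraph_e :: "('a \<Rightarrow> ereal) \<Rightarrow> ('a \<times> real) set" where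
  "epigraph_e f = {(x, t). f x \<le> ereal t}"

definition convex_fun :: "('a::real_vector \<Rightarrow> ereal) \<Rightarrow> bool" where
  "convex_fun f \<longleftrightarrow> convex (epigraph_e f)"

definition closed_fun :: "('a::topological_space \<Rightarrow> ereal) \<Rightarrow> bool" where
  "closed_fun f \<longleftrightarrow> closed (epigraph_e f)"

text \<open>Subdifferential (empty outside the effective domain).\<close>
definition subdiff :: "('a::real_inner \<Rightarrow> ereal) \<Rightarrow> 'a \<Rightarrow> 'a set" where
  "subdiff f x = {v. f x \<noteq> \<infinity> \<and> (\<forall>y. f x + ereal (inner v (y - x)) \<le> f y)}"

definition monotone_op :: "('a::real_inner \<Rightarrow> 'a set) \<Rightarrow> bool" where
  "monotone_op T \<longleftrightarrow> (\<forall>x y u v. u \<in> T x \<longrightarrow> v \<in> T y \<longrightarrow> 0 \<le> inner (x - y) (u - v))"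

definition maximal_monotone :: "('a::real_inner \<Rightarrow> 'a set) \<Rightarrow> bool" where
  "maximal_monotone T \<longleftrightarrow> monotone_op T \<and>
     (\<forall>S. monotone_op S \<and> (\<forall>x. T x \<subseteq> S x) \<longrightarrow> S = T)"

definition symmetric_mat :: "real^'n^'n \<Rightarrow> bool" where
  "symmetric_mat M \<longleftrightarrow> transpose M = M"

definition psd_mat :: "real^'n^'n \<Rightarrow> bool" where
  "psd_mat M \<longleftrightarrow> symmetric_mat M \<and> (\<forall>x. 0 \<le> x \<bullet> (M *v x))"

definition pd_mat :: "real^'n^'n \<Rightarrow> bool" where
  "pd_mat M \<longleftrightarrow> symmetric_mat M \<and> (\<forall>x. x \<noteq> 0 \<longrightarrow> 0 < x \<bullet> (M *v x))"

definition region_R :: "real \<Rightarrow> (real \<times> real) set" where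
  "region_R s = {(\<tau>, \<theta>). -1 < \<tau> \<and> \<tau> < 1 - s \<and> 0 < \<tau> + \<theta> \<and>
      (1 - \<tau>^2) * (2 - \<tau> - \<theta> - s) - (1 - \<theta>)^2 * (1 - \<tau> - s) > 0}"

definition T_op :: "(real^'n \<Rightarrow> ereal) \<Rightarrow> (real^'p \<Rightarrow> ereal) \<Rightarrow> real^'n^'m \<Rightarrow> real^'p^'m \<Rightarrow> real^'m
   \<Rightarrow> ((real^'n) \<times> (real^'p) \<times> (real^'m)) \<Rightarrow> ((real^'n) \<times> (real^'p) \<times> (real^'m)) set" where
  "T_op f g A B b = (\<lambda>(x, y, \<gamma>).
     {(u - transpose A *v \<gamma>, v - transpose B *v \<gamma>, A *v x + B *v y - b) | u v.
        u \<in> subdiff f x \<and> v \<in> subdiff g y})"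

definition block3 ::
  "real^'n^'n \<Rightarrow> real^'p^'n \<Rightarrow> real^'m^'n \<Rightarrow>
   real^'n^'p \<Rightarrow> real^'p^'p \<Rightarrow> real^'m^'p \<Rightarrow>
   real^'n^'m \<Rightarrow> real^'p^'m \<Rightarrow> real^'m^'m \<Rightarrow> real^('n + ('p + 'm))^('n + ('p + 'm))" where
  "block3 M11 M12 M13 M21 M22 M23 M31 M32 M33 = (\<chi> i j.
     (case i of
        Inl a \<Rightarrow> (case j of Inl c \<Rightarrow> M11 $ a $ c | Inr (Inl c) \<Rightarrow> M12 $ a $ c | Inr (Inr c) \<Rightarrow> M13 $ a $ c)
      | Inr (Inl a) \<Rightarrow> (case j of Inl c \<Rightarrow> M21 $ a $ c | Inr (Inl c) \<Rightarrow> M22 $ a $ c | Inr (Inr c) \<Rightarrow> M23 $ a $ c)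
      | Inr (Inr a) \<Rightarrow> (case j of Inl c \<Rightarrow> M31 $ a $ c | Inr (Inl c) \<Rightarrow> M32 $ a $ c | Inr (Inr c) \<Rightarrow> M33 $ a $ c)))"

definition M_mat :: "real^'n^'n \<Rightarrow> real^'p^'p \<Rightarrow> real^'p^'m \<Rightarrow> real \<Rightarrow> real \<Rightarrow> real
   \<Rightarrow> real^('n + ('p + 'm))^('n + ('p + 'm))" where
  "M_mat G H B \<beta> \<tau> \<theta> = block3
     G 0 0
     0 (H + (((\<tau> - \<tau> * \<theta> + \<theta>) * \<beta>) / (\<tau> + \<theta>)) *\<^sub>R (transpose B ** B)) ((- \<tau> / (\<tau> + \<theta>)) *\<^sub>R transpose B)
     0 ((- \<tau> / (\<tau> + \<theta>)) *\<^sub>R B) ((1 / ((\<tau> + \<theta>) * \<beta>)) *\<^sub>R mat 1)"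

end

theory Submission
  imports Defs
begin


lemma conv_ineq:
  fixes f :: "'a::real_vector \<Rightarrow> ereal"
  assumes "convex_fun f" "f x = ereal a" "f y = ereal b" "0 \<le> t" "t \<le> 1"
  shows "f ((1 - t) *\<^sub>R x + t *\<^sub>R y) \<le> ereal ((1 - t) * a + t * b)"
proof -
  have ex: "(x, a) \<in> epigraph_e f" "(y, b) \<in> epigraph_e f" using assms by (auto simp: epigraph_e_def)
  have "(1 - t) *\<^sub>R (x, a) + t *\<^sub>R (y, b) \<in> epigraph_e f"
    using assms(1) ex assms(4,5) unfolding convex_fun_def by (intro convexD) auto
  then show ?thesis by (simp add: epigraph_e_def)
qed

lemma closed_sublevel:
  fixes f :: "'a::topological_space \<Rightarrow> ereal"
  assumes "closed_fun f"
  shows "closed {x. f x \<le> ereal t}"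
proof -
  have "{x. f x \<le> ereal t} = (\<lambda>x. (x, t)) -` epigraph_e f" by (auto simp: epigraph_e_def)
  moreover have "closed ((\<lambda>x. (x, t)) -` epigraph_e f)"
    using assms unfolding closed_fun_def
    by (intro closed_vimage continuous_intros)
  ultimately show ?thesis by simp
qed

lemma lsc_bdd:
  fixes f :: "'a::topological_space \<Rightarrow> ereal"
  assumes "proper_fun f" "closed_fun f" "compact K"
  shows "\<exists>m. \<forall>x\<in>K. ereal m \<le> f x"
proof -
  define U where "U n = - {x. f x \<le> ereal (- real n)}" for n :: nat
  have op: "open (U n)" for n unfolding U_def using closed_sublevel[OF assms(2)] by auto
  have cov: "K \<subseteq> (\<Union>n\<in>UNIV. U n)"
  proof
    fix x assume "x \<in> K"
    have "f x \<noteq> -\<infinity>" using assms(1) by (auto simp: proper_fun_def)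
    then obtain n :: nat where "ereal (- real n) < f x"
    proof (cases "f x")
      case (real r)
      obtain n :: nat where "- r < real n" using reals_Archimedean2 by blast
      then have "- real n < r" by linarith
      then show ?thesis using that[of n] real by auto
    next
      case PInf then show ?thesis using that[of 0] by simp
    qed (use \<open>f x \<noteq> -\<infinity>\<close> in simp)
    then have "x \<in> U n" by (simp add: U_def not_le)
    then show "x \<in> (\<Union>n\<in>UNIV. U n)" by blast
  qed
  obtain D where D: "D \<subseteq> UNIV" "finite D" "K \<subseteq> (\<Union>n\<in>D. U n)"
    by (rule compactE_image[OF assms(3), of UNIV U, OF op cov])
  show ?thesis
  proof (intro exI ballI)
    fix x assume "x \<in> K"
    then obtain n where n: "n \<in> D" "x \<in> U n" using D by auto
    have "n \<le> Max (insert 0 D)" using n D by simp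
    then have "ereal (- real (Max (insert 0 D))) \<le> ereal (- real n)" by simp
    also have "\<dots> \<le> f x" using n(2) by (simp add: U_def)
    finally show "ereal (- real (Max (insert 0 D))) \<le> f x" .
  qed
qed

lemma lin_minor:
  fixes f :: "'a::euclidean_space \<Rightarrow> ereal"
  assumes "proper_fun f" "closed_fun f" "convex_fun f" "f x1 = ereal a"
  shows "\<exists>m C. C \<ge> 0 \<and> (\<forall>x b. f x = ereal b \<longrightarrow> m - C * norm (x - x1) \<le> b)"
proof -
  obtain m where m: "\<forall>x\<in>cball x1 1. ereal m \<le> f x"
    using lsc_bdd[OF assms(1,2), of "cball x1 1"] by auto
  have "x1 \<in> cball x1 1" by simp
  then have "ereal m \<le> ereal a" using m assms(4) by metis
  then have ma: "m \<le> a" by simp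
  show ?thesis
  proof (intro exI conjI allI impI)
    show "0 \<le> a - m" using ma by simp
    fix x b assume fx: "f x = ereal b"
    define r where "r = norm (x - x1)"
    show "m - (a - m) * norm (x - x1) \<le> b"
    proof (cases "r \<le> 1")
      case True
      then have "x \<in> cball x1 1" by (simp add: r_def dist_norm norm_minus_commute)
      then have "ereal m \<le> f x" using m by blast
      then have "ereal m \<le> ereal b" using fx by simp
      then have "m \<le> b" by simp
      moreover have "0 \<le> (a - m) * norm (x - x1)" using ma by simp
      ultimately show ?thesis by linarith
    next
      case False
      then have r1: "r > 1" by simp
      define t where "t = 1 / r"
      have t01: "0 \<le> t" "t \<le> 1" using r1 by (auto simp: t_def)
      define x' where "x' = (1 - t) *\<^sub>R x1 + t *\<^sub>R x"
      have "x' - x1 = t *\<^sub>R (x - x1)" by (simp add: x'_def algebra_simps)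
      moreover have "r \<noteq> 0" using r1 by simp
      ultimately have "norm (x' - x1) = 1" by (simp add: t_def r_def)
      then have "x' \<in> cball x1 1" by (simp add: dist_norm norm_minus_commute)
      then have "ereal m \<le> f x'" using m by auto
      also have "\<dots> \<le> ereal ((1 - t) * a + t * b)"
        unfolding x'_def by (rule conv_ineq[OF assms(3) assms(4) fx t01])
      finally have i: "m \<le> (1 - t) * a + t * b" by simp
      have "r * m \<le> r * ((1 - t) * a + t * b)" using i r1 by (simp add: mult_left_mono)
      also have "\<dots> = (r - 1) * a + b" using r1 by (simp add: t_def field_simps)
      finally have "r * m \<le> (r - 1) * a + b" .
      then have "a - (a - m) * r \<le> b" by (simp add: algebra_simps)
      then show ?thesis unfolding r_def using ma by linarith
    qed
  qed
qed



lemma prox_exists: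
  fixes f :: "'a::euclidean_space \<Rightarrow> ereal"
  assumes "proper_fun f" "closed_fun f" "convex_fun f"
  shows "\<exists>z a. f z = ereal a \<and> (\<forall>y b. f y = ereal b \<longrightarrow> a + norm (z - p)^2 / 2 \<le> b + norm (y - p)^2 / 2)"
proof -
  obtain x1 where "f x1 \<noteq> \<infinity>" "f x1 \<noteq> -\<infinity>" using assms(1) by (auto simp: proper_fun_def)
  then obtain a where fx1: "f x1 = ereal a" by (cases "f x1") auto
  obtain m C where C0: "C \<ge> 0" and mC: "\<And>x b. f x = ereal b \<Longrightarrow> m - C * norm (x - x1) \<le> b"
    using lin_minor[OF assms fx1] by blast
  define d where "d = norm (x1 - p)"
  define H1 where "H1 = a + norm (x1 - p)^2 / 2"
  define \<alpha> where "\<alpha> = m - C * d"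
  define U where "U = 2 * C + 2 * \<bar>H1 - \<alpha>\<bar> + 2"
  define L where "L = m - C * (U + d)"
  have lowb: "\<alpha> - C * norm (y - p) \<le> b" if "f y = ereal b" for y b
  proof -
    have "norm (y - x1) \<le> norm (y - p) + d"
    proof -
      have "y - x1 = (y - p) + (p - x1)" by simp
      then have "norm (y - x1) \<le> norm (y - p) + norm (p - x1)" by (metis norm_triangle_ineq)
      then show ?thesis unfolding d_def by (simp add: norm_minus_commute)
    qed
    then have "C * norm (y - x1) \<le> C * (norm (y - p) + d)" using C0 by (simp add: mult_left_mono)
    then show ?thesis using mC[OF that] unfolding \<alpha>_def by (simp add: algebra_simps)
  qed
  have claimA: "H1 < b + norm (y - p)^2 / 2" if "f y = ereal b" "norm (y - p) > U" for y b
  proof -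
    define u where "u = norm (y - p)"
    have uU: "u > U" using that u_def by simp
    have U1: "U \<ge> 2" unfolding U_def using C0 by simp
    have h1: "u / 2 - C \<ge> \<bar>H1 - \<alpha>\<bar> + 1" using uU unfolding U_def by simp
    have u1: "u \<ge> 1" using uU U1 by simp
    have "u * (u / 2 - C) \<ge> 1 * (\<bar>H1 - \<alpha>\<bar> + 1)"
      using h1 u1 by (intro mult_mono) auto
    then have "u^2 / 2 - C * u \<ge> \<bar>H1 - \<alpha>\<bar> + 1" by (simp add: power2_eq_square algebra_simps)
    then have "u^2 / 2 - C * u > H1 - \<alpha>" using abs_ge_self[of "H1 - \<alpha>"] by linarith
    moreover have "\<alpha> - C * u \<le> b" using lowb[OF that(1)] u_def by simp
    ultimately show ?thesis unfolding u_def by linarith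
  qed
  have claimB: "L \<le> b" if "f y = ereal b" "norm (y - p) \<le> U" for y b
  proof -
    have "C * norm (y - p) \<le> C * U" using that(2) C0 by (simp add: mult_left_mono)
    then show ?thesis using lowb[OF that(1)] unfolding L_def \<alpha>_def by (simp add: algebra_simps)
  qed
  define S where "S = epigraph_e f \<inter> (cball p U \<times> {L..H1})"
  have cS: "compact S" unfolding S_def
    using assms(2) unfolding closed_fun_def
    by (intro closed_Int_compact compact_Times compact_cball compact_Icc) auto
  have x1U: "norm (x1 - p) \<le> U"
  proof (rule ccontr)
    assume "\<not> ?thesis"
    then have "H1 < a + norm (x1 - p)^2 / 2" using claimA[OF fx1] by simp
    then show False unfolding H1_def by simp
  qed
  have x1S: "(x1, a) \<in> S" unfolding S_def epigraph_e_def
    using x1U claimB[OF fx1 x1U] fx1 by (auto simp: H1_def dist_norm norm_minus_commute)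
  define Q where "Q = (\<lambda>w. snd w + norm (fst w - p)^2 / 2)"
  have contS: "continuous_on S Q"
    unfolding Q_def by (intro continuous_intros) auto
  have "S \<noteq> {}" using x1S by blast
  from continuous_attains_inf[OF cS this contS] obtain zt where zt: "zt \<in> S" "\<And>w. w \<in> S \<Longrightarrow> Q zt \<le> Q w"
    by blast
  obtain z t where ztp: "zt = (z, t)" by (cases zt)
  have fz: "f z \<le> ereal t" using zt(1) ztp by (auto simp: S_def epigraph_e_def)
  have "f z \<noteq> -\<infinity>" using assms(1) by (auto simp: proper_fun_def)
  with fz obtain c where fzc: "f z = ereal c" by (cases "f z") auto
  have ct: "c \<le> t" using fz fzc by simp
  have tle: "t + norm (z - p)^2 / 2 \<le> b + norm (y - p)^2 / 2" if "f y = ereal b" for y b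
  proof (cases "b + norm (y - p)^2 / 2 \<le> H1")
    case True
    have yU: "norm (y - p) \<le> U" using claimA[OF that] True by fastforce
    have "0 \<le> norm (y - p)^2 / 2" by simp
    then have "b \<le> H1" using True by linarith
    then have "(y, b) \<in> S" unfolding S_def epigraph_e_def
      using yU claimB[OF that yU] that by (auto simp: dist_norm norm_minus_commute)
    then show ?thesis using zt(2)[of "(y, b)"] ztp by (simp add: Q_def)
  next
    case False
    have "t + norm (z - p)^2 / 2 \<le> a + norm (x1 - p)^2 / 2" using zt(2)[OF x1S] ztp by (simp add: Q_def)
    then show ?thesis using False unfolding H1_def by simp
  qed
  show ?thesis
  proof (intro exI[of _ z] exI[of _ c] conjI allI impI)
    show "f z = ereal c" by (rule fzc)
    fix y b assume "f y = ereal b"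
    have "c + norm (z - p)^2 / 2 \<le> t + norm (z - p)^2 / 2" using ct by simp
    also have "\<dots> \<le> b + norm (y - p)^2 / 2" by (rule tle) fact
    finally show "c + norm (z - p)^2 / 2 \<le> b + norm (y - p)^2 / 2" .
  qed
qed

lemma norm_add_sq: "norm ((a::'a::real_inner) + b)^2 = norm a^2 + 2 * (a \<bullet> b) + norm b^2"
  by (simp add: power2_norm_eq_inner inner_add_left inner_add_right inner_commute[of b a])

lemma prox_subdiff:
  fixes f :: "'a::real_inner \<Rightarrow> ereal"
  assumes "proper_fun f" "convex_fun f" "f z = ereal a"
    and min: "\<And>y b. f y = ereal b \<Longrightarrow> a + norm (z - p)^2 / 2 \<le> b + norm (y - p)^2 / 2"
  shows "p - z \<in> subdiff f z"
  unfolding subdiff_def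
proof (intro CollectI conjI allI)
  show "f z \<noteq> \<infinity>" using assms by simp
  fix y
  show "f z + ereal ((p - z) \<bullet> (y - z)) \<le> f y"
  proof (cases "f y")
    case PInf then show ?thesis using assms by simp
  next
    case MInf then show ?thesis using assms(1) by (auto simp: proper_fun_def)
  next
    case (real b)
    define D where "D = a - b + (p - z) \<bullet> (y - z)"
    define N where "N = norm (y - z)^2 / 2"
    have key: "D \<le> t * N" if t: "0 < t" "t \<le> 1" for t
    proof -
      define yt where "yt = (1 - t) *\<^sub>R z + t *\<^sub>R y"
      have "f yt \<le> ereal ((1 - t) * a + t * b)"
        unfolding yt_def using conv_ineq[OF assms(2,3) real] t by simp
      moreover have "f yt \<noteq> -\<infinity>" using assms(1) by (auto simp: proper_fun_def)
      ultimately obtain c where c: "f yt = ereal c" "c \<le> (1 - t) * a + t * b" by (cases "f yt") auto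
      have m: "a + norm (z - p)^2 / 2 \<le> c + norm (yt - p)^2 / 2" using min[OF c(1)] .
      have e: "yt - p = (z - p) + t *\<^sub>R (y - z)" by (simp add: yt_def algebra_simps)
      have d: "norm ((z - p) + t *\<^sub>R (y - z))^2 = norm (z - p)^2 + 2 * ((z - p) \<bullet> (t *\<^sub>R (y - z))) + norm (t *\<^sub>R (y - z))^2"
        by (rule norm_add_sq)
      have d2: "(z - p) \<bullet> (t *\<^sub>R (y - z)) = t * ((z - p) \<bullet> (y - z))" by simp
      have n2: "norm (t *\<^sub>R (y - z))^2 = t^2 * norm (y - z)^2" by (simp add: power_mult_distrib)
      have "norm (yt - p)^2 = norm (z - p)^2 + 2 * (t * ((z - p) \<bullet> (y - z))) + t^2 * norm (y - z)^2"
        unfolding e d d2 n2 by simp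
      then have "t * a \<le> t * b + t * ((z - p) \<bullet> (y - z)) + t * (t * N)"
        using m c(2) unfolding N_def by (simp add: algebra_simps power2_eq_square)
      then have "t * D \<le> t * (t * N)" unfolding D_def by (simp add: algebra_simps inner_diff_left)
      then show ?thesis using t by simp
    qed
    have N0: "N \<ge> 0" unfolding N_def by simp
    have "D \<le> 0"
    proof (rule ccontr)
      assume "\<not> D \<le> 0"
      then have D0: "D > 0" by simp
      define t where "t = min 1 (D / (N + 1))"
      have t0: "0 < t" "t \<le> 1" using D0 N0 by (auto simp: t_def)
      have "t * N \<le> D / (N + 1) * N" using N0 by (intro mult_right_mono) (auto simp: t_def)
      also have "\<dots> < D" using D0 N0 by (simp add: field_simps)
      finally show False using key[OF t0] by simp
    qed
    then show ?thesis using real assms(3) unfolding D_def by simp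
  qed
qed

lemma subdiff_mono:
  fixes f :: "'a::real_inner \<Rightarrow> ereal"
  assumes "proper_fun f" "u \<in> subdiff f x" "v \<in> subdiff f y"
  shows "0 \<le> (x - y) \<bullet> (u - v)"
proof -
  have fx: "f x \<noteq> \<infinity>" "f y \<noteq> \<infinity>" using assms by (auto simp: subdiff_def)
  moreover have "f x \<noteq> -\<infinity>" "f y \<noteq> -\<infinity>" using assms(1) by (auto simp: proper_fun_def)
  ultimately obtain a b where ab: "f x = ereal a" "f y = ereal b" by (cases "f x"; cases "f y") auto
  have "f x + ereal (u \<bullet> (y - x)) \<le> f y" "f y + ereal (v \<bullet> (x - y)) \<le> f x"
    using assms by (auto simp: subdiff_def)
  then have "a + u \<bullet> (y - x) \<le> b" "b + v \<bullet> (x - y) \<le> a" using ab by auto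
  then show ?thesis by (simp add: inner_diff_left inner_diff_right inner_commute algebra_simps)
qed



lemma inner_transpose: "(x::real^'n::finite) \<bullet> (transpose A *v y) = (A *v x) \<bullet> y"
  by (metis dot_lmul_matrix inner_commute transpose_matrix_vector)

lemma T_mem: "w \<in> T_op f g A B b (x, y, \<gamma>) \<longleftrightarrow>
  (\<exists>u v. w = (u - transpose A *v \<gamma>, v - transpose B *v \<gamma>, A *v x + B *v y - b) \<and> u \<in> subdiff f x \<and> v \<in> subdiff g y)"
  by (auto simp: T_op_def)

lemma skew_id:
  fixes A :: "real^'n::finite^'m::finite" and B :: "real^'p::finite^'m"
  shows "(dx, dy, dg) \<bullet> (du - transpose A *v dg, dv - transpose B *v dg, A *v dx + B *v dy) = dx \<bullet> du + dy \<bullet> dv"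
proof -
  have "(dx, dy, dg) \<bullet> (du - transpose A *v dg, dv - transpose B *v dg, A *v dx + B *v dy)
     = dx \<bullet> du - dx \<bullet> (transpose A *v dg) + (dy \<bullet> dv - dy \<bullet> (transpose B *v dg)) + (dg \<bullet> (A *v dx) + dg \<bullet> (B *v dy))"
    by (simp only: inner_Pair inner_diff_right inner_add_right)
  also have "\<dots> = dx \<bullet> du + dy \<bullet> dv"
    by (simp only: inner_transpose inner_commute[of "A *v dx"] inner_commute[of "B *v dy"])
  finally show ?thesis .
qed

lemma T_monotone:
  assumes "proper_fun f" "proper_fun g"
  shows "monotone_op (T_op f g A B b)"
  unfolding monotone_op_def
proof (intro allI impI)
  fix z z' w w' assume w: "w \<in> T_op f g A B b z" and w': "w' \<in> T_op f g A B b z'"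
  obtain x y \<gamma> where z: "z = (x, y, \<gamma>)" by (cases z) auto
  obtain x' y' \<gamma>' where z': "z' = (x', y', \<gamma>')" by (cases z') auto
  obtain u v where uv: "w = (u - transpose A *v \<gamma>, v - transpose B *v \<gamma>, A *v x + B *v y - b)"
      "u \<in> subdiff f x" "v \<in> subdiff g y" using w z T_mem by blast
  obtain u' v' where uv': "w' = (u' - transpose A *v \<gamma>', v' - transpose B *v \<gamma>', A *v x' + B *v y' - b)"
      "u' \<in> subdiff f x'" "v' \<in> subdiff g y'" using w' z' T_mem by blast
  have "w - w' = ((u - u') - transpose A *v (\<gamma> - \<gamma>'), (v - v') - transpose B *v (\<gamma> - \<gamma>'), A *v (x - x') + B *v (y - y'))"
    unfolding uv uv' by (simp del: transpose_matrix_vector add: matrix_vector_mult_diff_distrib algebra_simps)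
  then have "(z - z') \<bullet> (w - w') = (x - x', y - y', \<gamma> - \<gamma>') \<bullet> ((u - u') - transpose A *v (\<gamma> - \<gamma>'), (v - v') - transpose B *v (\<gamma> - \<gamma>'), A *v (x - x') + B *v (y - y'))"
    unfolding z z' by simp
  also have "\<dots> = (x - x') \<bullet> (u - u') + (y - y') \<bullet> (v - v')" by (rule skew_id)
  finally have "(z - z') \<bullet> (w - w') = (x - x') \<bullet> (u - u') + (y - y') \<bullet> (v - v')" .
  moreover have "0 \<le> (x - x') \<bullet> (u - u')" by (rule subdiff_mono[OF assms(1) uv(2) uv'(2)])
  moreover have "0 \<le> (y - y') \<bullet> (v - v')" by (rule subdiff_mono[OF assms(2) uv(3) uv'(3)])
  ultimately show "0 \<le> (z - z') \<bullet> (w - w')" by simp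
qed

lemma prox_point:
  fixes f :: "'a::euclidean_space \<Rightarrow> ereal"
  assumes "proper_fun f" "closed_fun f" "convex_fun f"
  shows "\<exists>x. p - x \<in> subdiff f x"
proof -
  obtain z a where "f z = ereal a" "\<forall>y b. f y = ereal b \<longrightarrow> a + norm (z - p)^2 / 2 \<le> b + norm (y - p)^2 / 2"
    using prox_exists[OF assms] by blast
  then show ?thesis using prox_subdiff[OF assms(1,3)] by blast
qed

lemma T_maximal:
  fixes f :: "real^'n::finite \<Rightarrow> ereal" and g :: "real^'p::finite \<Rightarrow> ereal"
    and A :: "real^'n^'m::finite" and B :: "real^'p^'m"
  assumes f: "proper_fun f" "closed_fun f" "convex_fun f"
    and g: "proper_fun g" "closed_fun g" "convex_fun g"
  shows "maximal_monotone (T_op f g A B b)"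
  unfolding maximal_monotone_def
proof (intro conjI allI impI)
  show "monotone_op (T_op f g A B b)" using T_monotone f(1) g(1) by blast
  fix S assume S: "monotone_op S \<and> (\<forall>z. T_op f g A B b z \<subseteq> S z)"
  show "S = T_op f g A B b"
  proof (rule ext, rule equalityI)
    fix z0
    show "T_op f g A B b z0 \<subseteq> S z0" using S by blast
    show "S z0 \<subseteq> T_op f g A B b z0"
    proof
      fix w0 assume w0: "w0 \<in> S z0"
      obtain x0 y0 \<gamma>0 where z0: "z0 = (x0, y0, \<gamma>0)" by (cases z0) auto
      obtain a c d where w0p: "w0 = (a, c, d)" by (cases w0) auto
      define p1 where "p1 = x0 + a + transpose A *v \<gamma>0"
      define p2 where "p2 = y0 + c + transpose B *v \<gamma>0"
      obtain x where x: "p1 - x \<in> subdiff f x" using prox_point[OF f] by blast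
      obtain y where y: "p2 - y \<in> subdiff g y" using prox_point[OF g] by blast
      define \<gamma> where "\<gamma> = \<gamma>0 + d - A *v x0 - B *v y0 + b"
      define w where "w = ((p1 - x) - transpose A *v \<gamma>, (p2 - y) - transpose B *v \<gamma>, A *v x + B *v y - b)"
      have wT: "w \<in> T_op f g A B b (x, y, \<gamma>)" unfolding T_mem w_def using x y by blast
      then have "w \<in> S (x, y, \<gamma>)" using S by blast
      then have mono: "0 \<le> (z0 - (x, y, \<gamma>)) \<bullet> (w0 - w)" using S w0 unfolding monotone_op_def by blast
      define dx where "dx = x - x0"
      define dy where "dy = y - y0"
      define dg where "dg = \<gamma> - \<gamma>0"
      have wd: "w0 - w = (dx + transpose A *v dg, dy + transpose B *v dg, dg - A *v dx - B *v dy)"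
        unfolding w0p w_def dx_def dy_def dg_def p1_def p2_def \<gamma>_def
        by (simp del: transpose_matrix_vector add: matrix_vector_mult_diff_distrib algebra_simps)
      have zd: "z0 - (x, y, \<gamma>) = (- dx, - dy, - dg)" unfolding z0 dx_def dy_def dg_def by simp
      have "(z0 - (x, y, \<gamma>)) \<bullet> (w0 - w) = - (dx \<bullet> dx + dy \<bullet> dy + dg \<bullet> dg)"
      proof -
        have "(z0 - (x, y, \<gamma>)) \<bullet> (w0 - w) = - (dx \<bullet> dx + dx \<bullet> (transpose A *v dg)) - (dy \<bullet> dy + dy \<bullet> (transpose B *v dg))
             - (dg \<bullet> dg - dg \<bullet> (A *v dx) - dg \<bullet> (B *v dy))"
          unfolding zd wd by (simp only: inner_Pair inner_diff_right inner_add_right inner_minus_left)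
        also have "\<dots> = - (dx \<bullet> dx + dy \<bullet> dy + dg \<bullet> dg)"
          by (simp only: inner_transpose inner_commute[of "A *v dx"] inner_commute[of "B *v dy"])
        finally show ?thesis .
      qed
      with mono have "dx \<bullet> dx + dy \<bullet> dy + dg \<bullet> dg \<le> 0" by simp
      moreover have "0 \<le> dx \<bullet> dx" "0 \<le> dy \<bullet> dy" "0 \<le> dg \<bullet> dg" by simp_all
      ultimately have "dx \<bullet> dx = 0" "dy \<bullet> dy = 0" "dg \<bullet> dg = 0" by linarith+
      then have 0: "dx = 0" "dy = 0" "dg = 0" by simp_all
      then have "w0 - w = 0" using wd by (simp add: zero_prod_def)
      then have "w0 = w" by simp
      moreover have "(x, y, \<gamma>) = z0" using 0 unfolding z0 dx_def dy_def dg_def by simp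
      ultimately show "w0 \<in> T_op f g A B b z0" using wT by simp
    qed
  qed
qed



definition p1 :: "real^('n::finite + ('p::finite + 'm::finite)) \<Rightarrow> real^'n" where "p1 x = (\<chi> i. x $ Inl i)"
definition p2 :: "real^('n::finite + ('p::finite + 'm::finite)) \<Rightarrow> real^'p" where "p2 x = (\<chi> i. x $ Inr (Inl i))"
definition p3 :: "real^('n::finite + ('p::finite + 'm::finite)) \<Rightarrow> real^'m" where "p3 x = (\<chi> i. x $ Inr (Inr i))"

lemma sum_split3:
  fixes h :: "('n::finite + ('p::finite + 'm::finite)) \<Rightarrow> real"
  shows "sum h UNIV = (\<Sum>a\<in>UNIV. h (Inl a)) + (\<Sum>a\<in>UNIV. h (Inr (Inl a))) + (\<Sum>a\<in>UNIV. h (Inr (Inr a)))"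
proof -
  have "sum h UNIV = sum h (UNIV <+> (UNIV <+> UNIV))" by simp
  also have "\<dots> = (\<Sum>a\<in>UNIV. h (Inl a)) + sum (h \<circ> Inr) (UNIV <+> UNIV)"
    by (subst sum.Plus) auto
  also have "sum (h \<circ> Inr) (UNIV <+> UNIV) = (\<Sum>a\<in>UNIV. h (Inr (Inl a))) + (\<Sum>a\<in>UNIV. h (Inr (Inr a)))"
    by (subst sum.Plus) auto
  finally show ?thesis by simp
qed

lemma block3_quad:
  fixes x :: "real^('n::finite + ('p::finite + 'm::finite))"
  shows "x \<bullet> (block3 M11 M12 M13 M21 M22 M23 M31 M32 M33 *v x) =
    p1 x \<bullet> (M11 *v p1 x + M12 *v p2 x + M13 *v p3 x) +
    p2 x \<bullet> (M21 *v p1 x + M22 *v p2 x + M23 *v p3 x) +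
    p3 x \<bullet> (M31 *v p1 x + M32 *v p2 x + M33 *v p3 x)"
  unfolding inner_vec_def matrix_vector_mult_def block3_def p1_def p2_def p3_def
  by (simp add: sum_split3[where h="\<lambda>j. _ j"] sum_distrib_left sum.distrib)

lemma mv_neg_scale: "(- (c *\<^sub>R A)) *v (y::real^'n::finite) = - (c *\<^sub>R (A *v y))"
  by (metis matrix_vector_mult_scaleR scaleR_matrix_vector_assoc scaleR_minus_left)

lemma inner_vmul: "(x::real^'n::finite) \<bullet> (y v* B) = (B *v x) \<bullet> y"
  by (metis dot_lmul_matrix inner_commute)

lemma psd_part:
  fixes G :: "real^'n::finite^'n" and H :: "real^'p::finite^'p" and B :: "real^'p^'m::finite"
  assumes G: "pd_mat G" and H: "psd_mat H" and bp: "\<beta> > 0" and st: "\<tau> + \<theta> > 0" and t1: "\<tau> < 1"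
  shows "psd_mat (M_mat G H B \<beta> \<tau> \<theta>)"
proof -
  have Gs: "transpose G = G" and Hs: "transpose H = H"
    using G H by (auto simp: pd_mat_def psd_mat_def symmetric_mat_def)
  have g: "G $ a $ c = G $ c $ a" for a c using Gs by (metis transpose_def vec_lambda_beta)
  have h: "H $ a $ c = H $ c $ a" for a c using Hs by (metis transpose_def vec_lambda_beta)
  have ij: "transpose (M_mat G H B \<beta> \<tau> \<theta>) $ i $ j = M_mat G H B \<beta> \<tau> \<theta> $ i $ j" for i j
    unfolding M_mat_def block3_def transpose_def
    by (auto split: sum.splits simp: g h matrix_matrix_mult_def mat_def mult.commute)
  have sym: "symmetric_mat (M_mat G H B \<beta> \<tau> \<theta>)"
    unfolding symmetric_mat_def by (simp add: vec_eq_iff ij)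
  have quad: "0 \<le> x \<bullet> (M_mat G H B \<beta> \<tau> \<theta> *v x)" for x
  proof -
    define s where "s = \<tau> + \<theta>"
    define u where "u = B *v p2 x"
    define w where "w = p3 x"
    define k where "k = (\<tau> - \<tau> * \<theta> + \<theta>) * \<beta> / (\<tau> + \<theta>)"
    define c where "c = - \<tau> / (\<tau> + \<theta>)"
    define d where "d = 1 / ((\<tau> + \<theta>) * \<beta>)"
    have m22: "(H + k *\<^sub>R (transpose B ** B)) *v p2 x = H *v p2 x + k *\<^sub>R (transpose B *v u)"
      unfolding u_def by (simp only: matrix_vector_mult_add_rdistrib scaleR_matrix_vector_assoc[symmetric] matrix_vector_mul_assoc)
    have m23: "(c *\<^sub>R transpose B) *v w = c *\<^sub>R (transpose B *v w)"
      by (simp only: scaleR_matrix_vector_assoc[symmetric])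
    have m32: "(c *\<^sub>R B) *v p2 x = c *\<^sub>R u"
      unfolding u_def by (simp only: scaleR_matrix_vector_assoc[symmetric])
    have m33: "(d *\<^sub>R mat 1) *v w = d *\<^sub>R w"
      by (simp only: scaleR_matrix_vector_assoc[symmetric] matrix_vector_mul_lid)
    have e0: "x \<bullet> (M_mat G H B \<beta> \<tau> \<theta> *v x) = p1 x \<bullet> (G *v p1 x) + p2 x \<bullet> (H *v p2 x + k *\<^sub>R (transpose B *v u) + c *\<^sub>R (transpose B *v w))
       + w \<bullet> (c *\<^sub>R u + d *\<^sub>R w)"
      unfolding M_mat_def block3_quad k_def[symmetric] c_def[symmetric] d_def[symmetric] w_def[symmetric]
      by (simp only: m22 m23 m32 m33 matrix_vector_mult_0 add_0_right add_0_left)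
    have e: "x \<bullet> (M_mat G H B \<beta> \<tau> \<theta> *v x) = p1 x \<bullet> (G *v p1 x) + p2 x \<bullet> (H *v p2 x)
       + k * (u \<bullet> u) + 2 * c * (u \<bullet> w) + d * (w \<bullet> w)"
      unfolding e0 by (simp only: inner_add_right inner_scaleR_right inner_transpose u_def[symmetric]) (simp add: inner_commute algebra_simps)
    have kk: "k = ((\<tau> - \<tau> * \<theta> + \<theta>) * \<beta> / s)" "c = - \<tau> / s" "d = 1 / (s * \<beta>)"
      using k_def c_def d_def s_def by auto
    note e = e[unfolded kk]
    have g0: "0 \<le> p1 x \<bullet> (G *v p1 x)" using G unfolding pd_mat_def
      by (metis inner_zero_left order.strict_implies_order order_refl)
    have h0: "0 \<le> p2 x \<bullet> (H *v p2 x)" using H unfolding psd_mat_def by blast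
    have sp: "s > 0" using st s_def by simp
    have sq: "0 \<le> (1 / (s * \<beta>)) * ((w - (\<tau> * \<beta>) *\<^sub>R u) \<bullet> (w - (\<tau> * \<beta>) *\<^sub>R u))"
      using sp bp by simp
    have sq2: "(1 / (s * \<beta>)) * ((w - (\<tau> * \<beta>) *\<^sub>R u) \<bullet> (w - (\<tau> * \<beta>) *\<^sub>R u))
       = (1 / (s * \<beta>)) * (w \<bullet> w) + 2 * (- \<tau> / s) * (u \<bullet> w) + (\<tau>^2 * \<beta> / s) * (u \<bullet> u)"
      using sp bp by (simp add: inner_diff_left inner_diff_right inner_commute field_simps power2_eq_square)
    have r1: "(\<tau> - \<tau> * \<theta> + \<theta>) - \<tau>^2 = (1 - \<tau>) * s"
      unfolding s_def by (simp add: algebra_simps power2_eq_square)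
    have r2: "((\<tau> - \<tau> * \<theta> + \<theta>) * \<beta> / s) - (\<tau>^2 * \<beta> / s) = \<beta> * ((\<tau> - \<tau> * \<theta> + \<theta>) - \<tau>^2) / s"
      by (simp add: diff_divide_distrib add_divide_distrib algebra_simps)
    have rest: "((\<tau> - \<tau> * \<theta> + \<theta>) * \<beta> / s) * (u \<bullet> u) - (\<tau>^2 * \<beta> / s) * (u \<bullet> u) = \<beta> * (1 - \<tau>) * (u \<bullet> u)"
      using sp by (simp only: left_diff_distrib[symmetric] r2 r1) simp
    have "0 \<le> \<beta> * (1 - \<tau>) * (u \<bullet> u)" using bp t1 by simp
    then show ?thesis unfolding e using g0 h0 sq sq2 rest by linarith
  qed
  show ?thesis using sym quad unfolding psd_mat_def by blast
qed


theorem proposition2p1: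
  fixes f :: "real^'n \<Rightarrow> ereal" and g :: "real^'p \<Rightarrow> ereal"
    and A :: "real^'n^'m" and B :: "real^'p^'m" and b :: "real^'m"
    and G :: "real^'n^'n" and H :: "real^'p^'p"
    and \<beta> \<sigma> \<tau> \<theta> :: real
  assumes "proper_fun f" "closed_fun f" "convex_fun f"
    and "proper_fun g" "closed_fun g" "convex_fun g"
    and "\<beta> > 0" and "0 \<le> \<sigma>" and "\<sigma> < 1"
    and "pd_mat G" and "psd_mat H"
    and "(\<tau>, \<theta>) \<in> region_R \<sigma>"
  shows "maximal_monotone (T_op f g A B b) \<and> psd_mat (M_mat G H B \<beta> \<tau> \<theta>)"
proof
  show "maximal_monotone (T_op f g A B b)"
    by (rule T_maximal) (use assms in auto)
  have r: "\<tau> + \<theta> > 0" "\<tau> < 1" using assms(8,12) by (auto simp: region_R_def)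
  show "psd_mat (M_mat G H B \<beta> \<tau> \<theta>)"
    by (rule psd_part[OF assms(10,11,7) r])
qed

end
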